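(* Let $G=(\{f_i\},\{c_i\},\{X_i\},W)$ be a networked public goods game (as in the context). Suppose there exist $\boldsymbol{\gamma}\in\mathbb{R}_{++}^n$ and constants $c, L_0\ge 0$ such that (1) for every $i$ and every fixed $d\in[\underline{d}_i,\bar{d}_i]$, the function $x\mapsto\gamma_i\big(f_i(x+d)-c_i(x)\big)$ is $c$-concave on $X_i$; (2) $f_i'$ is $L_0$-Lipschitz for every $i$; (3) $c>L_0\,\sigma_{\max}(\Sigma)$, where $\Sigma=(\sigma_{ij})$ with $\sigma_{ij}=\sum_{k\ne i}\gamma_k|w_{ki}w_{kj}|$ and $\sigma_{\max}$ denotes the maximum singular value. Then $G$ has a unique (pure) Nash equilibrium.
   Context: There are $n$ players; player $i$ chooses effort $x_i\in X_i=[\underline{x}_i,\bar{x}_i]$, $X=\prod_iX_i$. $W=(w_{ij})$ is a real $n\times n$ matrix with $w_{ii}=1$. The gain of $i$ is $k_i=\sum_jw_{ij}x_j\in K_i=[\underline{k}_i,\bar{k}_i]$ (min and max over $X$). $f_i:K_i\to\mathbb{R}$ is twice differentiable, concave and strictly increasing; $c_i:X_i\to\mathbb{R}$ is twice differentiable, convex and strictly increasing; utility $u_i(\mathbf{x})=f_i(k_i)-c_i(x_i)$. A Nash equilibrium is $\mathbf{x}\in X$ with $u_i(x_i',\mathbf{x}_{-i})\le u_i(\mathbf{x})$ for all $i$, $x_i'\in X_i$. The externality gain bounds are $\underline{d}_i=\sum_{j\ne i}\big(\mathbf{1}\{w_{ij}>0\}w_{ij}\underline{x}_j+\mathbf{1}\{w_{ij}<0\}w_{ij}\bar{x}_j\big)$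 and $\bar{d}_i=\sum_{j\ne i}\big(\mathbf{1}\{w_{ij}>0\}w_{ij}\bar{x}_j+\mathbf{1}\{w_{ij}<0\}w_{ij}\underline{x}_j\big)$. A differentiable $g$ on a convex set is $c$-concave if $g(y)\le g(x)+\langle y-x,\nabla g(x)\rangle-\frac c2\|y-x\|^2$ for all $x,y$. *)

theory Defs
  imports "HOL-Analysis.Analysis"
begin

text \<open>Players are indexed by a finite type 'n (n = CARD('n)). Effort profiles are
vectors x :: real^'n, the network is W :: real^'n^'n, and the strategy set of player i
is the interval [lo$i, hi$i].\<close>

definition strat :: "real^'n \<Rightarrow> real^'n \<Rightarrow> 'n \<Rightarrow> real set" where
  "strat lo hi i = {lo$i .. hi$i}"

definition profiles :: "real^'n \<Rightarrow> real^'n \<Rightarrow> (real^'n) set" where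
  "profiles lo hi = {x. \<forall>i. x$i \<in> strat lo hi i}"

definition gain :: "real^'n^'n \<Rightarrow> 'n \<Rightarrow> real^'n \<Rightarrow> real" where
  "gain W i x = (\<Sum>j\<in>UNIV. W$i$j * x$j)"

definition gainset :: "real^'n^'n \<Rightarrow> real^'n \<Rightarrow> real^'n \<Rightarrow> 'n \<Rightarrow> real set" where
  "gainset W lo hi i = gain W i ` profiles lo hi"

definition utility :: "('n \<Rightarrow> real \<Rightarrow> real) \<Rightarrow> ('n \<Rightarrow> real \<Rightarrow> real) \<Rightarrow> real^'n^'n
    \<Rightarrow> 'n \<Rightarrow> real^'n \<Rightarrow> real" where
  "utility f c W i x = f i (gain W i x) - c i (x$i)"

definition upd :: "real^'n \<Rightarrow> 'n \<Rightarrow> real \<Rightarrow> real^'n" where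
  "upd x i t = (\<chi> j. if j = i then t else x$j)"

definition nash_eq :: "('n \<Rightarrow> real \<Rightarrow> real) \<Rightarrow> ('n \<Rightarrow> real \<Rightarrow> real) \<Rightarrow> real^'n^'n
    \<Rightarrow> real^'n \<Rightarrow> real^'n \<Rightarrow> real^'n \<Rightarrow> bool" where
  "nash_eq f c W lo hi x \<longleftrightarrow> x \<in> profiles lo hi \<and>
     (\<forall>i. \<forall>t\<in>strat lo hi i. utility f c W i (upd x i t) \<le> utility f c W i x)"

definition d_lo :: "real^'n^'n \<Rightarrow> real^'n \<Rightarrow> real^'n \<Rightarrow> 'n \<Rightarrow> real" where
  "d_lo W lo hi i = (\<Sum>j\<in>UNIV - {i}.
      (if W$i$j > 0 then W$i$j * lo$j else 0) + (if W$i$j < 0 then W$i$j * hi$j else 0))"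

definition d_hi :: "real^'n^'n \<Rightarrow> real^'n \<Rightarrow> real^'n \<Rightarrow> 'n \<Rightarrow> real" where
  "d_hi W lo hi i = (\<Sum>j\<in>UNIV - {i}.
      (if W$i$j > 0 then W$i$j * hi$j else 0) + (if W$i$j < 0 then W$i$j * lo$j else 0))"

text \<open>c-concavity of a differentiable real function on a convex set S (one-dimensional case;
the gradient is the derivative within S).\<close>
definition c_concave_on :: "real \<Rightarrow> real set \<Rightarrow> (real \<Rightarrow> real) \<Rightarrow> bool" where
  "c_concave_on cc S g \<longleftrightarrow> convex S \<and> (\<forall>x\<in>S. \<exists>D. (g has_real_derivative D) (at x within S) \<and>
      (\<forall>y\<in>S. g y \<le> g x + (y - x) * D - cc / 2 * (y - x)\<^sup>2))"

definition sigma_max :: "real^'n^'n \<Rightarrow> real" where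
  "sigma_max A = sqrt (Sup {e. \<exists>v. v \<noteq> 0 \<and> (transpose A ** A) *v v = e *\<^sub>R v})"

definition Sigma_mat :: "real^'n \<Rightarrow> real^'n^'n \<Rightarrow> real^'n^'n" where
  "Sigma_mat \<gamma> W = (\<chi> i j. \<Sum>k\<in>UNIV - {i}. \<gamma>$k * \<bar>W$k$i * W$k$j\<bar>)"

end

theory Submission
  imports Defs
begin

lemma deriv_right_le:
  fixes g :: "real \<Rightarrow> real"
  assumes d: "(g has_real_derivative D) (at x within S)" and sub: "{x..y} \<subseteq> S" and xy: "x < y"
    and b: "\<And>t. x < t \<Longrightarrow> t \<le> y \<Longrightarrow> (g t - g x)/(t - x) \<le> B"
  shows "D \<le> B"
proof -
  have "(g has_real_derivative D) (at x within {x..y})" using DERIV_subset d sub by blast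
  hence "((\<lambda>t. (g t - g x)/(t - x)) \<longlongrightarrow> D) (at_right x)"
    using has_field_derivative_iff at_within_Icc_at_right[OF xy] by metis
  moreover have "eventually (\<lambda>t. (g t - g x)/(t - x) \<le> B) (at_right x)"
    unfolding eventually_at_right_field using xy b by (intro exI[of _ y]) auto
  ultimately show ?thesis using tendsto_upperbound by force
qed

lemma deriv_right_ge:
  fixes g :: "real \<Rightarrow> real"
  assumes d: "(g has_real_derivative D) (at x within S)" and sub: "{x..y} \<subseteq> S" and xy: "x < y"
    and b: "\<And>t. x < t \<Longrightarrow> t \<le> y \<Longrightarrow> B \<le> (g t - g x)/(t - x)"
  shows "B \<le> D"
proof -
  have "(g has_real_derivative D) (at x within {x..y})" using DERIV_subset d sub by blast
  hence "((\<lambda>t. (g t - g x)/(t - x)) \<longlongrightarrow> D) (at_right x)"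
    using has_field_derivative_iff at_within_Icc_at_right[OF xy] by metis
  moreover have "eventually (\<lambda>t. B \<le> (g t - g x)/(t - x)) (at_right x)"
    unfolding eventually_at_right_field using xy b by (intro exI[of _ y]) auto
  ultimately show ?thesis using tendsto_lowerbound by force
qed

lemma deriv_left_le:
  fixes g :: "real \<Rightarrow> real"
  assumes d: "(g has_real_derivative D) (at x within S)" and sub: "{y..x} \<subseteq> S" and xy: "y < x"
    and b: "\<And>t. y \<le> t \<Longrightarrow> t < x \<Longrightarrow> (g t - g x)/(t - x) \<le> B"
  shows "D \<le> B"
proof -
  have "(g has_real_derivative D) (at x within {y..x})" using DERIV_subset d sub by blast
  hence "((\<lambda>t. (g t - g x)/(t - x)) \<longlongrightarrow> D) (at_left x)"
    using has_field_derivative_iff at_within_Icc_at_left[OF xy] by metis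
  moreover have "eventually (\<lambda>t. (g t - g x)/(t - x) \<le> B) (at_left x)"
    unfolding eventually_at_left_field using xy b by (intro exI[of _ y]) auto
  ultimately show ?thesis using tendsto_upperbound by force
qed

lemma deriv_left_ge:
  fixes g :: "real \<Rightarrow> real"
  assumes d: "(g has_real_derivative D) (at x within S)" and sub: "{y..x} \<subseteq> S" and xy: "y < x"
    and b: "\<And>t. y \<le> t \<Longrightarrow> t < x \<Longrightarrow> B \<le> (g t - g x)/(t - x)"
  shows "B \<le> D"
proof -
  have "(g has_real_derivative D) (at x within {y..x})" using DERIV_subset d sub by blast
  hence "((\<lambda>t. (g t - g x)/(t - x)) \<longlongrightarrow> D) (at_left x)"
    using has_field_derivative_iff at_within_Icc_at_left[OF xy] by metis
  moreover have "eventually (\<lambda>t. B \<le> (g t - g x)/(t - x)) (at_left x)"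
    unfolding eventually_at_left_field using xy b by (intro exI[of _ y]) auto
  ultimately show ?thesis using tendsto_lowerbound by force
qed

lemma foc_interval:
  fixes g :: "real \<Rightarrow> real"
  assumes d: "(g has_real_derivative D) (at x within {a..b})" and x: "x \<in> {a..b}" and y: "y \<in> {a..b}"
    and mx: "\<And>t. t \<in> {a..b} \<Longrightarrow> g t \<le> g x"
  shows "D * (y - x) \<le> 0"
proof (cases "x < y")
  case True
  have "D \<le> 0"
  proof (rule deriv_right_le[OF d _ True])
    show "{x..y} \<subseteq> {a..b}" using x y by auto
    fix t assume "x < t" "t \<le> y"
    then have "g t - g x \<le> 0" using mx x y by auto
    then show "(g t - g x) / (t - x) \<le> 0" using \<open>x < t\<close> by (simp add: divide_nonpos_pos)
  qed
  then show ?thesis using True by (simp add: mult_nonpos_nonneg)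
next
  case False
  show ?thesis
  proof (cases "y < x")
    case True
    have "0 \<le> D"
    proof (rule deriv_left_ge[OF d _ True])
      show "{y..x} \<subseteq> {a..b}" using x y by auto
      fix t assume "y \<le> t" "t < x"
      then have "g t - g x \<le> 0" using mx x y by auto
      then show "0 \<le> (g t - g x) / (t - x)" using \<open>t < x\<close> by (simp add: divide_nonpos_neg)
    qed
    then show ?thesis using True by (simp add: mult_nonneg_nonpos)
  next
    case False
    then show ?thesis using \<open>\<not> x < y\<close> by simp
  qed
qed

lemma concave_tangent:
  fixes g :: "real \<Rightarrow> real"
  assumes cv: "concave_on {a..b} g" and d: "(g has_real_derivative D) (at x within {a..b})"
    and x: "x \<in> {a..b}" and y: "y \<in> {a..b}"
  shows "g y - g x \<le> D * (y - x)"
proof (cases "x < y")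
  case True
  have "(g y - g x) / (y - x) \<le> D"
  proof (rule deriv_right_ge[OF d _ True])
    show "{x..y} \<subseteq> {a..b}" using x y by auto
    fix t assume t: "x < t" "t \<le> y"
    define s where "s = (t - x) / (y - x)"
    have s0: "0 < s" and s1: "s \<le> 1" using t True by (auto simp: s_def divide_simps)
    have e: "s * (y - x) = t - x" using True by (simp add: s_def)
    have ts: "t = (1 - s) *\<^sub>R x + s *\<^sub>R y" using e by (simp add: algebra_simps)
    have "g t \<ge> (1 - s) * g x + s * g y"
      unfolding ts by (rule concave_onD[OF cv]) (use s0 s1 x y in auto)
    hence "s * (g y - g x) \<le> g t - g x" by (simp add: algebra_simps)
    moreover have "t - x = s * (y - x)" using True by (simp add: s_def)
    ultimately show "(g y - g x) / (y - x) \<le> (g t - g x) / (t - x)"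
      using s0 True by (simp add: divide_simps mult.commute mult.left_commute)
  qed
  then show ?thesis using True by (simp add: divide_simps)
next
  case False
  show ?thesis
  proof (cases "y < x")
    case True
    have "D \<le> (g y - g x) / (y - x)"
    proof (rule deriv_left_le[OF d _ True])
      show "{y..x} \<subseteq> {a..b}" using x y by auto
      fix t assume t: "y \<le> t" "t < x"
      define s where "s = (x - t) / (x - y)"
      have s0: "0 < s" and s1: "s \<le> 1" using t True by (auto simp: s_def divide_simps)
      have e: "s * (x - y) = x - t" using True by (simp add: s_def)
      have ts: "t = (1 - s) *\<^sub>R x + s *\<^sub>R y" using e by (simp add: algebra_simps)
      have "g t \<ge> (1 - s) * g x + s * g y"
        unfolding ts by (rule concave_onD[OF cv]) (use s0 s1 x y in auto)
      hence "s * (g y - g x) \<le> g t - g x" by (simp add: algebra_simps)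
      moreover have "t - x = s * (y - x)" using True by (simp add: s_def field_simps)
      ultimately show "(g t - g x) / (t - x) \<le> (g y - g x) / (y - x)"
        using s0 True by (simp add: divide_simps mult.commute mult.left_commute)
    qed
    then show ?thesis using True by (simp add: divide_simps mult.commute)
  next
    case False
    then show ?thesis using \<open>\<not> x < y\<close> by simp
  qed
qed

lemma inner_transpose_mult:
  fixes M :: "real^'n^'n"
  shows "inner w ((transpose M ** M) *v u) = inner (M *v w) (M *v u)"
proof -
  have "(transpose M ** M) *v u = transpose M *v (M *v u)" by (simp add: matrix_vector_mul_assoc)
  also have "\<dots> = (M *v u) v* M" by simp
  finally have "inner w ((transpose M ** M) *v u) = inner ((M *v u) v* M) w" by (simp add: inner_commute)
  also have "\<dots> = inner (M *v u) (M *v w)" by (rule dot_lmul_matrix)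
  finally show ?thesis by (simp add: inner_commute)
qed

lemma sigma_max_bound:
  fixes M :: "real^'n^'n"
  shows "norm (M *v a) \<le> sigma_max M * norm a"
proof -
  define q where "q u = inner (M *v u) (M *v u)" for u
  define A where "A = transpose M ** M"
  have contq: "continuous_on (sphere 0 1) q"
  proof -
    have "continuous_on UNIV (\<lambda>u. M *v u)" by (rule linear_continuous_on) simp
    then have "continuous_on UNIV q" unfolding q_def by (intro continuous_on_inner)
    then show ?thesis by (rule continuous_on_subset) simp
  qed
  obtain v0 :: "real^'n" where "norm v0 = 1" using vector_choose_size[of 1] by auto
  then have ne: "sphere (0::real^'n) 1 \<noteq> {}" by auto
  obtain v where v: "v \<in> sphere 0 1" and vmax: "\<And>u. u \<in> sphere 0 1 \<Longrightarrow> q u \<le> q v"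
    using continuous_attains_sup[OF compact_sphere ne contq] by blast
  define lam where "lam = q v"
  have nv: "norm v = 1" using v by simp
  have bound: "q u \<le> lam * (norm u)^2" for u
  proof (cases "u = 0")
    case True then show ?thesis by (simp add: q_def lam_def)
  next
    case False
    then have nu: "norm u > 0" by simp
    have "(inverse (norm u)) *\<^sub>R u \<in> sphere 0 1" using nu by (simp add: norm_scaleR)
    then have "q ((inverse (norm u)) *\<^sub>R u) \<le> lam" using vmax lam_def by blast
    moreover have "q ((inverse (norm u)) *\<^sub>R u) = q u / (norm u)^2"
      by (simp add: q_def matrix_vector_mult_scaleR power2_eq_square divide_simps)
    ultimately have "q u = (norm u)^2 * q ((inverse (norm u)) *\<^sub>R u)" "q ((inverse (norm u)) *\<^sub>R u) \<le> lam"
      using nu by (simp_all add: divide_simps mult.commute)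
    then show ?thesis by (metis mult_left_mono zero_le_power2 mult.commute)
  qed
  have lam_nn: "lam \<ge> 0" unfolding lam_def q_def by simp
  have eig: "A *v v = lam *\<^sub>R v"
  proof (rule ccontr)
    assume ne0: "A *v v \<noteq> lam *\<^sub>R v"
    define r where "r = A *v v - lam *\<^sub>R v"
    have rn: "inner r r > 0" using ne0 by (simp add: r_def)
    define K where "K = lam * inner r r - q r"
    have K0: "K \<ge> 0" using bound[of r] by (simp add: K_def power2_norm_eq_inner)
    define t where "t = inner r r / (K + 1)"
    have t0: "t > 0" using rn K0 by (simp add: t_def)
    have key: "inner r (A *v v) = inner r r + lam * inner r v"
      by (simp add: r_def inner_diff_left inner_diff_right inner_commute) (simp add: algebra_simps)
    have e1: "q (v + t *\<^sub>R r) = q v + 2 * t * inner r (A *v v) + t^2 * q r"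
      unfolding q_def A_def inner_transpose_mult
      by (simp add: algebra_simps inner_add_left inner_add_right inner_commute power2_eq_square)
    have e2: "(norm (v + t *\<^sub>R r))^2 = 1 + 2 * t * inner r v + t^2 * inner r r"
    proof -
      have vv: "inner v v = 1" using power2_norm_eq_inner[of v] nv by simp
      show ?thesis unfolding power2_norm_eq_inner using vv
        by (simp add: inner_add_left inner_add_right inner_commute algebra_simps power2_eq_square)
    qed
    have "q (v + t *\<^sub>R r) \<le> lam * (norm (v + t *\<^sub>R r))^2" by (rule bound)
    then have "2 * t * inner r r \<le> t^2 * K"
      unfolding e1 e2 key K_def lam_def[symmetric] by (simp add: algebra_simps power2_eq_square)
    then have "2 * inner r r \<le> t * K" using t0 by (simp add: power2_eq_square)
    also have "t * K < t * (K + 1)" using t0 by simp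
    also have "t * (K + 1) = inner r r" using K0 by (simp add: t_def)
    finally show False using rn by simp
  qed
  define E where "E = {e. \<exists>w. w \<noteq> 0 \<and> (transpose M ** M) *v w = e *\<^sub>R w}"
  have lamE: "lam \<in> E" unfolding E_def A_def[symmetric] using eig nv by (intro CollectI exI[of _ v]) auto
  have leE: "e \<le> lam" if "e \<in> E" for e
  proof -
    have "\<exists>w. w \<noteq> 0 \<and> (transpose M ** M) *v w = e *\<^sub>R w" using that unfolding E_def by simp
    then obtain w where w: "w \<noteq> 0" "A *v w = e *\<^sub>R w" unfolding A_def by blast
    have "e * inner w w = inner w (A *v w)" using w by simp
    also have "\<dots> = q w" unfolding A_def inner_transpose_mult q_def ..
    also have "\<dots> \<le> lam * inner w w" using bound[of w] by (simp add: power2_norm_eq_inner)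
    finally show ?thesis using w by simp
  qed
  have "Sup E = lam" by (rule cSup_eq_maximum[OF lamE leE])
  then have sm: "sigma_max M = sqrt lam" unfolding sigma_max_def E_def by simp
  have "norm (M *v a) = sqrt (q a)" by (simp add: q_def norm_eq_sqrt_inner)
  also have "\<dots> \<le> sqrt (lam * (norm a)^2)" using bound[of a] by simp
  also have "\<dots> = sqrt lam * norm a" by (simp add: real_sqrt_mult)
  finally show ?thesis using sm by simp
qed

definition dsum :: "real^'n^'n \<Rightarrow> 'n \<Rightarrow> real^'n \<Rightarrow> real" where
  "dsum W i x = (\<Sum>j\<in>UNIV - {i}. W$i$j * x$j)"

lemma upd_nth [simp]: "upd x i t $ j = (if j = i then t else x$j)"
  by (simp add: upd_def)

lemma upd_self [simp]: "upd x i (x$i) = x"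
  by (simp add: vec_eq_iff)

lemma dsum_upd [simp]: "dsum W i (upd x i t) = dsum W i x"
  unfolding dsum_def by (intro sum.cong) auto

lemma gain_split:
  assumes "W$i$i = 1"
  shows "gain W i x = x$i + dsum W i x"
  unfolding gain_def dsum_def using assms by (simp add: sum.remove[of UNIV i])

lemma gain_upd:
  assumes "W$i$i = 1"
  shows "gain W i (upd x i t) = t + dsum W i x"
  using gain_split[OF assms, of "upd x i t"] by simp

lemma upd_in_profiles:
  "x \<in> profiles lo hi \<Longrightarrow> t \<in> strat lo hi i \<Longrightarrow> upd x i t \<in> profiles lo hi"
  unfolding profiles_def by auto

lemma gain_in_gainset:
  "x \<in> profiles lo hi \<Longrightarrow> gain W i x \<in> gainset W lo hi i"
  unfolding gainset_def by auto

lemma shift_in_gainset: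
  assumes "W$i$i = 1" "x \<in> profiles lo hi" "t \<in> strat lo hi i"
  shows "t + dsum W i x \<in> gainset W lo hi i"
  using gain_in_gainset[OF upd_in_profiles[OF assms(2,3)], of W i] gain_upd[OF assms(1), of x t] by simp

lemma utility_upd:
  assumes "W$i$i = 1"
  shows "utility f c W i (upd x i t) = f i (t + dsum W i x) - c i t"
  unfolding utility_def gain_upd[OF assms] by simp

lemma profiles_cbox: "profiles lo hi = cbox lo hi"
  unfolding profiles_def strat_def by (auto simp: mem_box_cart)

lemma dsum_range:
  assumes "x \<in> profiles lo hi"
  shows "dsum W i x \<in> {d_lo W lo hi i .. d_hi W lo hi i}"
proof -
  have b: "lo$j \<le> x$j \<and> x$j \<le> hi$j" for j using assms unfolding profiles_def strat_def by auto
  have l: "(if W$i$j > 0 then W$i$j * lo$j else 0) + (if W$i$j < 0 then W$i$j * hi$j else 0) \<le> W$i$j * x$j" for j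
    using b[of j] by (auto simp: mult_left_mono mult_left_mono_neg)
  have u: "W$i$j * x$j \<le> (if W$i$j > 0 then W$i$j * hi$j else 0) + (if W$i$j < 0 then W$i$j * lo$j else 0)" for j
    using b[of j] by (auto simp: mult_left_mono mult_left_mono_neg)
  show ?thesis unfolding d_lo_def d_hi_def dsum_def
    using sum_mono[of "UNIV - {i}", OF l] sum_mono[of "UNIV - {i}", OF u] by auto
qed

lemma sum_offdiag_swap:
  fixes g :: "'n::finite \<Rightarrow> 'n \<Rightarrow> real"
  shows "(\<Sum>i\<in>UNIV. \<Sum>k\<in>UNIV - {i}. g i k) = (\<Sum>k\<in>UNIV. \<Sum>i\<in>UNIV - {k}. g i k)"
  by (simp add: sum_diff1 sum_subtractf sum.swap[of g])

lemma sigma_comb: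
  fixes W :: "real^'n^'n" and a \<gamma> :: "real^'n"
  assumes diag: "\<And>i. W$i$i = 1" and a: "\<And>i. a$i \<ge> 0" and g: "\<And>i. \<gamma>$i > 0"
  shows "(\<Sum>i\<in>UNIV. \<gamma>$i * a$i * (\<Sum>j\<in>UNIV - {i}. \<bar>W$i$j\<bar> * a$j)) \<le> inner a (Sigma_mat \<gamma> W *v a)"
proof -
  define F where "F i j k = a$i * (\<gamma>$k * \<bar>W$k$i * W$k$j\<bar>) * a$j" for i j k
  have F0: "F i j k \<ge> 0" for i j k unfolding F_def using a g
    by (intro mult_nonneg_nonneg) (auto intro: less_imp_le)
  have "inner a (Sigma_mat \<gamma> W *v a) = (\<Sum>i\<in>UNIV. \<Sum>j\<in>UNIV. \<Sum>k\<in>UNIV - {i}. F i j k)"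
    unfolding inner_vec_def Sigma_mat_def matrix_vector_mult_def F_def
    by (simp add: sum_distrib_left sum_distrib_right mult.assoc)
  also have "\<dots> = (\<Sum>i\<in>UNIV. \<Sum>k\<in>UNIV - {i}. \<Sum>j\<in>UNIV. F i j k)"
    by (intro sum.cong refl sum.swap)
  also have "\<dots> \<ge> (\<Sum>i\<in>UNIV. \<Sum>k\<in>UNIV - {i}. F i k k)"
    by (intro sum_mono member_le_sum) (auto simp: F0)
  finally have 1: "(\<Sum>i\<in>UNIV. \<Sum>k\<in>UNIV - {i}. F i k k) \<le> inner a (Sigma_mat \<gamma> W *v a)" .
  have "(\<Sum>i\<in>UNIV. \<Sum>k\<in>UNIV - {i}. F i k k) = (\<Sum>k\<in>UNIV. \<Sum>i\<in>UNIV - {k}. F i k k)"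
    by (rule sum_offdiag_swap)
  also have "\<dots> = (\<Sum>k\<in>UNIV. \<gamma>$k * a$k * (\<Sum>i\<in>UNIV - {k}. \<bar>W$k$i\<bar> * a$i))"
    unfolding F_def using diag by (simp add: sum_distrib_left abs_mult mult_ac)
  finally show ?thesis using 1 by simp
qed

lemma shift_deriv:
  fixes F F' :: "real \<Rightarrow> real"
  assumes dF: "\<And>k. k \<in> K \<Longrightarrow> (F has_real_derivative F' k) (at k within K)"
    and inK: "\<And>s. s \<in> S \<Longrightarrow> s + d \<in> K" and t: "t \<in> S"
  shows "((\<lambda>s. F (s + d)) has_real_derivative F' (t + d)) (at t within S)"
proof -
  have g: "((\<lambda>s. s + d) has_real_derivative 1) (at t within S)"
    by (auto intro!: derivative_eq_intros)
  have "(F has_real_derivative F' (t + d)) (at ((\<lambda>s. s + d) t) within ((\<lambda>s. s + d) ` S))"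
    by (rule DERIV_subset[OF dF[OF inK[OF t]]]) (use inK in auto)
  from DERIV_image_chain[OF this g] show ?thesis by (simp add: o_def)
qed

lemma clamp_fix:
  fixes l h x g t :: real
  assumes "max l (min h (x + g)) = x" "l \<le> t" "t \<le> h" "l \<le> h"
  shows "g * (t - x) \<le> 0"
proof (cases "g > 0")
  case True
  then have "x = h" using assms by (auto simp: max_def min_def split: if_splits)
  then show ?thesis using True assms by (simp add: mult_nonneg_nonpos)
next
  case False
  show ?thesis
  proof (cases "g < 0")
    case True
    then have "x = l" using assms by (auto simp: max_def min_def split: if_splits)
    then show ?thesis using True assms by (simp add: mult_nonpos_nonneg)
  next
    case False
    then show ?thesis using \<open>\<not> g > 0\<close> by simp
  qed
qed

lemma shift_concave:
  assumes cf: "concave_on K F" and inK: "\<And>s. s \<in> {a..b} \<Longrightarrow> s + d \<in> K"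
  shows "concave_on {a..(b::real)} (\<lambda>s. F (s + d))"
  unfolding concave_on_iff
proof (intro conjI ballI allI impI)
  show "convex {a..b}" by simp
  fix x y u v :: real assume xy: "x \<in> {a..b}" "y \<in> {a..b}" and uv: "0 \<le> u" "0 \<le> v" "u + v = 1"
  have all: "\<forall>x\<in>K. \<forall>y\<in>K. \<forall>u\<ge>0. \<forall>v\<ge>0. u + v = 1 \<longrightarrow> F (u *\<^sub>R x + v *\<^sub>R y) \<ge> u * F x + v * F y"
    using cf unfolding concave_on_iff by (elim conjE)
  have "u * F (x + d) + v * F (y + d) \<le> F (u *\<^sub>R (x + d) + v *\<^sub>R (y + d))"
    using all[rule_format, OF inK[OF xy(1)] inK[OF xy(2)] uv] .
  also have "u *\<^sub>R (x + d) + v *\<^sub>R (y + d) = u *\<^sub>R x + v *\<^sub>R y + (u + v) * d"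
    by (simp add: algebra_simps)
  also have "\<dots> = u *\<^sub>R x + v *\<^sub>R y + d" using uv by simp
  finally show "u * F (x + d) + v * F (y + d) \<le> F (u *\<^sub>R x + v *\<^sub>R y + d)" .
qed

lemma nash_exists:
  fixes W :: "real^'n^'n" and lo hi :: "real^'n"
    and f c f' c' f'' c'' :: "'n \<Rightarrow> real \<Rightarrow> real"
  assumes diag: "\<And>i. W$i$i = 1"
    and lohi: "\<And>i. lo$i \<le> hi$i"
    and f_d1: "\<And>i k. k \<in> gainset W lo hi i \<Longrightarrow>
                 (f i has_real_derivative f' i k) (at k within gainset W lo hi i)"
    and f_d2: "\<And>i k. k \<in> gainset W lo hi i \<Longrightarrow>
                 (f' i has_real_derivative f'' i k) (at k within gainset W lo hi i)"
    and f_conc: "\<And>i. concave_on (gainset W lo hi i) (f i)"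
    and c_d1: "\<And>i t. t \<in> strat lo hi i \<Longrightarrow>
                 (c i has_real_derivative c' i t) (at t within strat lo hi i)"
    and c_d2: "\<And>i t. t \<in> strat lo hi i \<Longrightarrow>
                 (c' i has_real_derivative c'' i t) (at t within strat lo hi i)"
    and c_conv: "\<And>i. convex_on (strat lo hi i) (c i)"
  shows "\<exists>x. nash_eq f c W lo hi x"
proof -
  let ?P = "profiles lo hi"
  define G where "G x i = f' i (gain W i x) - c' i (x$i)" for x i
  define T where "T x = (\<chi> i. max (lo$i) (min (hi$i) (x$i + G x i)))" for x
  have contf': "continuous_on (gainset W lo hi i) (f' i)" for i
    unfolding continuous_on_eq_continuous_within using DERIV_continuous[OF f_d2] by blast
  have contc': "continuous_on (strat lo hi i) (c' i)" for i
    unfolding continuous_on_eq_continuous_within using DERIV_continuous[OF c_d2] by blast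
  have contgain: "continuous_on ?P (gain W i)" for i
    unfolding gain_def by (intro continuous_intros)
  have c1: "continuous_on ?P (\<lambda>x. f' i (gain W i x))" for i
    by (rule continuous_on_compose2[OF contf' contgain]) (auto intro: gain_in_gainset)
  have c2: "continuous_on ?P (\<lambda>x. c' i (x$i))" for i
    by (rule continuous_on_compose2[OF contc']) (auto intro: continuous_intros simp: profiles_def)
  have contT: "continuous_on ?P T"
    unfolding T_def G_def by (intro continuous_intros c1 c2)
  have TP: "T \<in> ?P \<rightarrow> ?P"
    using lohi by (auto simp: T_def profiles_def strat_def)
  have "lo \<in> ?P" using lohi by (auto simp: profiles_def strat_def)
  then obtain x where xP: "x \<in> ?P" and fx: "T x = x"
    using brouwer[OF _ _ _ contT TP] unfolding profiles_cbox by auto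
  have "nash_eq f c W lo hi x"
    unfolding nash_eq_def
  proof (intro conjI allI ballI xP)
    fix i t assume t: "t \<in> strat lo hi i"
    define d where "d = dsum W i x"
    define h where "h s = f i (s + d) - c i s" for s
    have xi: "x$i \<in> strat lo hi i" using xP by (simp add: profiles_def)
    have inK: "s + d \<in> gainset W lo hi i" if "s \<in> strat lo hi i" for s
      unfolding d_def by (rule shift_in_gainset[OF diag xP that])
    have hd: "(h has_real_derivative G x i) (at (x$i) within strat lo hi i)"
    proof -
      have "((\<lambda>s. f i (s + d)) has_real_derivative f' i (x$i + d)) (at (x$i) within strat lo hi i)"
        by (rule shift_deriv[OF f_d1 inK xi])
      from DERIV_diff[OF this c_d1[OF xi]] show ?thesis
        unfolding h_def G_def gain_split[OF diag] d_def by simp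
    qed
    have hc: "concave_on (strat lo hi i) h"
      unfolding h_def strat_def
      by (rule concave_on_diff[OF shift_concave[OF f_conc] c_conv[unfolded strat_def]])
         (use inK in \<open>auto simp: strat_def\<close>)
    have "h t - h (x$i) \<le> G x i * (t - x$i)"
      by (rule concave_tangent[OF hc[unfolded strat_def] hd[unfolded strat_def]])
         (use t xi in \<open>auto simp: strat_def\<close>)
    also have "G x i * (t - x$i) \<le> 0"
    proof (rule clamp_fix)
      show "max (lo$i) (min (hi$i) (x$i + G x i)) = x$i" using fx by (metis T_def vec_lambda_beta)
    qed (use t lohi in \<open>auto simp: strat_def\<close>)
    finally have "h t \<le> h (x$i)" by simp
    then show "utility f c W i (upd x i t) \<le> utility f c W i x"
      using utility_upd[OF diag, of f c i x t] utility_upd[OF diag, of f c i x "x$i"]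
      by (simp add: h_def d_def)
  qed
  then show ?thesis by blast
qed

lemma nash_unique:
  fixes W :: "real^'n^'n" and lo hi :: "real^'n"
    and f c f' :: "'n \<Rightarrow> real \<Rightarrow> real"
    and \<gamma> :: "real^'n" and cc L0 :: real
  assumes diag: "\<And>i. W$i$i = 1"
    and f_d1: "\<And>i k. k \<in> gainset W lo hi i \<Longrightarrow>
                 (f i has_real_derivative f' i k) (at k within gainset W lo hi i)"
    and gamma_pos: "\<And>i. \<gamma>$i > 0"
    and L0_nonneg: "L0 \<ge> 0"
    and cond1: "\<And>i d. d \<in> {d_lo W lo hi i .. d_hi W lo hi i} \<Longrightarrow>
                 c_concave_on cc (strat lo hi i) (\<lambda>t. \<gamma>$i * (f i (t + d) - c i t))"
    and cond2: "\<And>i a b. a \<in> gainset W lo hi i \<Longrightarrow> b \<in> gainset W lo hi i \<Longrightarrow>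
                 \<bar>f' i a - f' i b\<bar> \<le> L0 * \<bar>a - b\<bar>"
    and cond3: "cc > L0 * sigma_max (Sigma_mat \<gamma> W)"
    and nx: "nash_eq f c W lo hi x" and ny: "nash_eq f c W lo hi y"
  shows "x = y"
proof -
  let ?P = "profiles lo hi"
  have half: "\<gamma>$i * (f i (w$i + dsum W i z) - c i (w$i))
      \<le> \<gamma>$i * (f i (z$i + dsum W i z) - c i (z$i)) - cc/2 * (w$i - z$i)^2"
    if nz: "nash_eq f c W lo hi z" and w: "w \<in> ?P" for z w i
  proof -
    define d where "d = dsum W i z"
    define h where "h t = \<gamma>$i * (f i (t + d) - c i t)" for t
    have zP: "z \<in> ?P" using nz by (simp add: nash_eq_def)
    have zi: "z$i \<in> {lo$i..hi$i}" and wi: "w$i \<in> {lo$i..hi$i}"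
      using zP w by (auto simp: profiles_def strat_def)
    have "c_concave_on cc (strat lo hi i) h"
      unfolding h_def d_def by (rule cond1[OF dsum_range[OF zP]])
    then obtain D where hD: "(h has_real_derivative D) (at (z$i) within {lo$i..hi$i})"
      and ineq: "\<And>y. y \<in> {lo$i..hi$i} \<Longrightarrow> h y \<le> h (z$i) + (y - z$i) * D - cc / 2 * (y - z$i)\<^sup>2"
      unfolding c_concave_on_def strat_def using zi by blast
    have mx: "h t \<le> h (z$i)" if "t \<in> {lo$i..hi$i}" for t
    proof -
      have "utility f c W i (upd z i t) \<le> utility f c W i z"
        using nz that by (simp add: nash_eq_def strat_def)
      then have "f i (t + d) - c i t \<le> f i (z$i + d) - c i (z$i)"
        using utility_upd[OF diag, of f c i z t] utility_upd[OF diag, of f c i z "z$i"]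
        by (simp add: d_def)
      then show ?thesis unfolding h_def using gamma_pos[of i] by simp
    qed
    have "D * (w$i - z$i) \<le> 0" by (rule foc_interval[OF hD zi wi mx])
    then show ?thesis using ineq[OF wi] unfolding h_def d_def by (simp add: mult.commute)
  qed
  have xP: "x \<in> ?P" and yP: "y \<in> ?P" using nx ny by (simp_all add: nash_eq_def)
  define a where "a = (\<chi> j. \<bar>x$j - y$j\<bar>)"
  have a0: "a$j \<ge> 0" for j by (simp add: a_def)
  have per: "cc * (a$i)^2 \<le> L0 * (\<gamma>$i * a$i * (\<Sum>j\<in>UNIV - {i}. \<bar>W$i$j\<bar> * a$j))" for i
  proof -
    define dx where "dx = dsum W i x"
    define dy where "dy = dsum W i y"
    define \<phi> where "\<phi> s = f i (s + dx) - f i (s + dy)" for s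
    note h1 = half[OF nx yP, of i] and h2 = half[OF ny xP, of i]
    have sq: "(y$i - x$i)^2 = (a$i)^2" "(x$i - y$i)^2 = (a$i)^2" by (simp_all add: a_def power2_commute)
    have "cc * (a$i)^2 \<le> \<gamma>$i * (\<phi> (x$i) - \<phi> (y$i))"
      using h1 h2 sq unfolding \<phi>_def dx_def dy_def by (simp add: algebra_simps)
    also have "\<dots> \<le> \<gamma>$i * \<bar>\<phi> (x$i) - \<phi> (y$i)\<bar>"
      using gamma_pos[of i] by (intro mult_left_mono) auto
    also have "\<bar>\<phi> (x$i) - \<phi> (y$i)\<bar> \<le> (L0 * \<bar>dx - dy\<bar>) * \<bar>x$i - y$i\<bar>"
    proof -
      have inKx: "s + dx \<in> gainset W lo hi i" if "s \<in> strat lo hi i" for s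
        unfolding dx_def by (rule shift_in_gainset[OF diag xP that])
      have inKy: "s + dy \<in> gainset W lo hi i" if "s \<in> strat lo hi i" for s
        unfolding dy_def by (rule shift_in_gainset[OF diag yP that])
      have "norm (\<phi> (x$i) - \<phi> (y$i)) \<le> (L0 * \<bar>dx - dy\<bar>) * norm (x$i - y$i)"
      proof (rule field_differentiable_bound[of "strat lo hi i"])
        show "convex (strat lo hi i)" by (simp add: strat_def)
        show "x$i \<in> strat lo hi i" "y$i \<in> strat lo hi i" using xP yP by (auto simp: profiles_def)
        fix s assume s: "s \<in> strat lo hi i"
        show "(\<phi> has_field_derivative (f' i (s + dx) - f' i (s + dy))) (at s within strat lo hi i)"
          unfolding \<phi>_def
          by (rule DERIV_diff[OF shift_deriv[OF f_d1 inKx s] shift_deriv[OF f_d1 inKy s]])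
        show "norm (f' i (s + dx) - f' i (s + dy)) \<le> L0 * \<bar>dx - dy\<bar>"
          using cond2[OF inKx[OF s] inKy[OF s]] by simp
      qed
      then show ?thesis by simp
    qed
    then have "\<gamma>$i * \<bar>\<phi> (x$i) - \<phi> (y$i)\<bar> \<le> \<gamma>$i * ((L0 * \<bar>dx - dy\<bar>) * \<bar>x$i - y$i\<bar>)"
      using gamma_pos[of i] by (intro mult_left_mono) auto
    also have "\<bar>dx - dy\<bar> \<le> (\<Sum>j\<in>UNIV - {i}. \<bar>W$i$j\<bar> * a$j)"
    proof -
      have "dx - dy = (\<Sum>j\<in>UNIV - {i}. W$i$j * (x$j - y$j))"
        unfolding dx_def dy_def dsum_def by (simp add: sum_subtractf[symmetric] right_diff_distrib)
      also have "\<bar>\<dots>\<bar> \<le> (\<Sum>j\<in>UNIV - {i}. \<bar>W$i$j * (x$j - y$j)\<bar>)" by (rule sum_abs)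
      also have "\<dots> = (\<Sum>j\<in>UNIV - {i}. \<bar>W$i$j\<bar> * a$j)" by (simp add: a_def abs_mult)
      finally show ?thesis .
    qed
    then have "\<gamma>$i * ((L0 * \<bar>dx - dy\<bar>) * \<bar>x$i - y$i\<bar>)
        \<le> \<gamma>$i * ((L0 * (\<Sum>j\<in>UNIV - {i}. \<bar>W$i$j\<bar> * a$j)) * \<bar>x$i - y$i\<bar>)"
      using gamma_pos[of i] L0_nonneg
      by (intro mult_left_mono mult_right_mono) auto
    also have "\<dots> = L0 * (\<gamma>$i * a$i * (\<Sum>j\<in>UNIV - {i}. \<bar>W$i$j\<bar> * a$j))"
      by (simp add: a_def mult_ac)
    finally show ?thesis .
  qed
  define S where "S = Sigma_mat \<gamma> W"
  have "cc * inner a a = (\<Sum>i\<in>UNIV. cc * (a$i)^2)"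
    by (simp add: inner_vec_def sum_distrib_left power2_eq_square)
  also have "\<dots> \<le> (\<Sum>i\<in>UNIV. L0 * (\<gamma>$i * a$i * (\<Sum>j\<in>UNIV - {i}. \<bar>W$i$j\<bar> * a$j)))"
    by (rule sum_mono[OF per])
  also have "\<dots> = L0 * (\<Sum>i\<in>UNIV. \<gamma>$i * a$i * (\<Sum>j\<in>UNIV - {i}. \<bar>W$i$j\<bar> * a$j))"
    by (simp add: sum_distrib_left)
  also have "\<dots> \<le> L0 * inner a (S *v a)"
    unfolding S_def by (rule mult_left_mono[OF sigma_comb[OF diag a0 gamma_pos] L0_nonneg])
  also have "\<dots> \<le> L0 * (norm a * norm (S *v a))"
    by (rule mult_left_mono[OF norm_cauchy_schwarz L0_nonneg])
  also have "\<dots> \<le> L0 * (norm a * (sigma_max S * norm a))"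
    by (intro mult_left_mono sigma_max_bound L0_nonneg norm_ge_zero)
  also have "\<dots> = (L0 * sigma_max S) * inner a a"
    by (simp add: power2_norm_eq_inner[symmetric] power2_eq_square)
  finally have "(cc - L0 * sigma_max S) * inner a a \<le> 0" by (simp add: algebra_simps)
  moreover have "cc - L0 * sigma_max S > 0" using cond3 by (simp add: S_def)
  ultimately have "inner a a \<le> 0" by (simp add: mult_le_0_iff)
  then have "inner a a = 0" using inner_ge_zero[of a] by linarith
  then have "a = 0" by simp
  then show ?thesis by (simp add: vec_eq_iff a_def)
qed

theorem theorem3p6:
  fixes W :: "real^'n^'n" and lo hi :: "real^'n"
    and f c f' c' f'' c'' :: "'n \<Rightarrow> real \<Rightarrow> real"
    and \<gamma> :: "real^'n" and cc L0 :: real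
  assumes diag: "\<And>i. W$i$i = 1"
    and lohi: "\<And>i. lo$i \<le> hi$i"
    and f_d1: "\<And>i k. k \<in> gainset W lo hi i \<Longrightarrow>
                 (f i has_real_derivative f' i k) (at k within gainset W lo hi i)"
    and f_d2: "\<And>i k. k \<in> gainset W lo hi i \<Longrightarrow>
                 (f' i has_real_derivative f'' i k) (at k within gainset W lo hi i)"
    and f_conc: "\<And>i. concave_on (gainset W lo hi i) (f i)"
    and f_incr: "\<And>i. strict_mono_on (gainset W lo hi i) (f i)"
    and c_d1: "\<And>i t. t \<in> strat lo hi i \<Longrightarrow>
                 (c i has_real_derivative c' i t) (at t within strat lo hi i)"
    and c_d2: "\<And>i t. t \<in> strat lo hi i \<Longrightarrow>
                 (c' i has_real_derivative c'' i t) (at t within strat lo hi i)"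
    and c_conv: "\<And>i. convex_on (strat lo hi i) (c i)"
    and c_incr: "\<And>i. strict_mono_on (strat lo hi i) (c i)"
    and gamma_pos: "\<And>i. \<gamma>$i > 0"
    and cc_nonneg: "cc \<ge> 0" and L0_nonneg: "L0 \<ge> 0"
    and cond1: "\<And>i d. d \<in> {d_lo W lo hi i .. d_hi W lo hi i} \<Longrightarrow>
                 c_concave_on cc (strat lo hi i) (\<lambda>t. \<gamma>$i * (f i (t + d) - c i t))"
    and cond2: "\<And>i a b. a \<in> gainset W lo hi i \<Longrightarrow> b \<in> gainset W lo hi i \<Longrightarrow>
                 \<bar>f' i a - f' i b\<bar> \<le> L0 * \<bar>a - b\<bar>"
    and cond3: "cc > L0 * sigma_max (Sigma_mat \<gamma> W)"
  shows "\<exists>!x. nash_eq f c W lo hi x"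
proof -
  obtain x where "nash_eq f c W lo hi x"
    using nash_exists[OF diag lohi f_d1 f_d2 f_conc c_d1 c_d2 c_conv] by blast
  moreover have "\<And>y z. nash_eq f c W lo hi y \<Longrightarrow> nash_eq f c W lo hi z \<Longrightarrow> y = z"
    by (rule nash_unique[OF diag f_d1 gamma_pos L0_nonneg cond1 cond2 cond3])
  ultimately show ?thesis by blast
qed

end
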